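(* Suppose the RB is stochastic monotone, i.e. satisfies: (D1) for each $a\in\{0,1\}$ and all $x<y$ in $\mathcal X$, $\sum_{w\ge z}P_{xw}(a)\le\sum_{w\ge z}P_{yw}(a)$ for every $z\in\mathcal X$; (D2) for every $z\in\mathcal X$, $S_{zx}(a):=\sum_{w\ge z}P_{xw}(a)$ is submodular in $(x,a)$; (D3) for each $a\in\{0,1\}$, $c(x,a)$ is non-decreasing in $x$; (D4) $c(x,a)$ is submodular in $(x,a)$. Then: 1. for every $\lambda\in\mathbb R$ there exists a threshold $\ell_\lambda\in\{0,\dots,|\mathcal X|\}$ such that the threshold policy $g^{(\ell_\lambda)}$ is optimal for minimizing $J^{(g)}_\lambda$ (if several such thresholds exist, $\ell_\lambda$ denotes the largest); 2. if, for every $x\in\mathcal X$, $N^{(g^{(\ell)})}(x)$ is non-increasing in $\ell$, then $\ell_\lambda$ is non-decreasing in $\lambda$; consequently the RB is indexable, its Whittle index $w(x)$ is non-decreasing in $x$, and for any $\ell\in\{0,\dots,|\mathcal X|-1\}$ the set $\{x: N^{(g^{(\ell)})}(x)\ne N^{(g^{(\ell+1)})}(x)\}$ is non-empty and for any $x$ in it, $w(\ell+1)=\dfrac{D^{(g^{(\ell+1)})}(x)-D^{(g^{(\ell)})}(x)}{N^{(g^{(\ell)})}(x)-N^{(g^{(\ell+1)})}(x)}$.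
   Context: A restless bandit (RB) has state space $\mathcal X=\{1,\dots,|\mathcal X|\}$ (totally ordered), actions $\{0,1\}$ (0 = passive, 1 = active, ordered $0<1$), transition matrices $P(0),P(1)$, cost $c:\mathcal X\times\{0,1\}\to\mathbb R$, discount factor $\beta\in(0,1)$. A function $f$ on a product of ordered sets is submodular if $f(x_1,y_2)-f(x_1,y_1)\ge f(x_2,y_2)-f(x_2,y_1)$ whenever $x_2\ge x_1$, $y_2\ge y_1$. For $\lambda\in\mathbb R$, $c_\lambda(x,a)=c(x,a)+\lambda a$. For a Markov policy $g$ (with $X_{t+1}$ drawn from $P_{X_t\,\cdot}(g(X_t))$): $J^{(g)}_\lambda(x)=(1-\beta)\mathbb E[\sum_{t\ge0}\beta^tc_\lambda(X_t,g(X_t))\mid X_0=x]$, $D^{(g)}(x)=(1-\beta)\mathbb E[\sum_{t\ge0}\beta^tc(X_t,g(X_t))\mid X_0=x]$, $N^{(g)}(x)=(1-\beta)\mathbb E[\sum_{t\ge0}\beta^tg(X_t)\mid X_0=x]$. For $\ell\in\{0,\dots,|\mathcal X|\}$, $g^{(\ell)}$ is passive at states $x\le\ell$ and active at states $x>\ell$. $V_\lambda$ is the fixed point of $V_\lambda(x)=\min\{H_\lambda(x,0),H_\lambda(x,1)\}$, $H_\lambda(x,a)=(1-\beta)c_\lambda(x,a)+\beta\sum_yP_{xy}(a)V_\lambda(y)$; $g_\lambda(x)=0$ iff $H_\lambda(x,0)<H_\lambda(x,1)$; $\Pi_\lambda=\{x:g_\lambda(x)=0\}$. Indexable: $\lambda'\le\lambda''\Rightarrow\Pi_{\lambda'}\subseteq\Pi_{\lambda''}$;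 Whittle index $w(x)=\inf\{\lambda:x\in\Pi_\lambda\}$. *)

theory Defs
  imports "HOL-Analysis.Analysis"
begin

text \<open>State space X = {1..n}; actions 0 (passive) and 1 (active) encoded as nat.
  P a x y is the transition probability from x to y under action a; c x a the cost.\<close>

fun Pt :: "nat \<Rightarrow> (nat \<Rightarrow> nat \<Rightarrow> nat \<Rightarrow> real) \<Rightarrow> (nat \<Rightarrow> nat) \<Rightarrow> nat \<Rightarrow> nat \<Rightarrow> nat \<Rightarrow> real" where
  "Pt n P g 0 x y = (if x = y then 1 else 0)"
| "Pt n P g (Suc t) x y = (\<Sum>z\<in>{1..n}. Pt n P g t x z * P (g z) z y)"

text \<open>(1-beta) E[ sum_t beta^t r(X_t, g(X_t)) | X_0 = x ], written out via the t-step laws.\<close>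
definition disc_val :: "nat \<Rightarrow> (nat \<Rightarrow> nat \<Rightarrow> nat \<Rightarrow> real) \<Rightarrow> real \<Rightarrow> (nat \<Rightarrow> nat)
    \<Rightarrow> (nat \<Rightarrow> nat \<Rightarrow> real) \<Rightarrow> nat \<Rightarrow> real" where
  "disc_val n P \<beta> g r x = (1 - \<beta>) * (\<Sum>t. \<beta> ^ t * (\<Sum>y\<in>{1..n}. Pt n P g t x y * r y (g y)))"

definition Jlam where
  "Jlam n P c \<beta> lam g x = disc_val n P \<beta> g (\<lambda>y a. c y a + lam * real a) x"

definition Dcost where
  "Dcost n P c \<beta> g x = disc_val n P \<beta> g c x"

definition Nact where
  "Nact n P \<beta> g x = disc_val n P \<beta> g (\<lambda>y a. real a) x"

definition markov_policy :: "nat \<Rightarrow> (nat \<Rightarrow> nat) \<Rightarrow> bool" where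
  "markov_policy n g = (\<forall>x\<in>{1..n}. g x \<in> {0, 1})"

definition thr :: "nat \<Rightarrow> nat \<Rightarrow> nat" where
  "thr l = (\<lambda>x. if x \<le> l then 0 else 1)"

definition optimal where
  "optimal n P c \<beta> lam g = (markov_policy n g \<and>
     (\<forall>g'. markov_policy n g' \<longrightarrow> (\<forall>x\<in>{1..n}. Jlam n P c \<beta> lam g x \<le> Jlam n P c \<beta> lam g' x)))"

definition ell where
  "ell n P c \<beta> lam = Max {l\<in>{0..n}. optimal n P c \<beta> lam (thr l)}"

definition Hq where
  "Hq n P c \<beta> lam V x a = (1 - \<beta>) * (c x a + lam * real a) + \<beta> * (\<Sum>y\<in>{1..n}. P a x y * V y)"

definition Vlam where
  "Vlam n P c \<beta> lam = (THE V. (\<forall>x\<in>{1..n}. V x = min (Hq n P c \<beta> lam V x 0) (Hq n P c \<beta> lam V x 1))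
                               \<and> (\<forall>x. x \<notin> {1..n} \<longrightarrow> V x = 0))"

definition passive_set where
  "passive_set n P c \<beta> lam = {x\<in>{1..n}. Hq n P c \<beta> lam (Vlam n P c \<beta> lam) x 0 < Hq n P c \<beta> lam (Vlam n P c \<beta> lam) x 1}"

definition indexable where
  "indexable n P c \<beta> = (\<forall>l1 l2. l1 \<le> l2 \<longrightarrow> passive_set n P c \<beta> l1 \<subseteq> passive_set n P c \<beta> l2)"

definition whittle where
  "whittle n P c \<beta> x = Inf {lam. x \<in> passive_set n P c \<beta> lam}"

definition submodular_on :: "'a::order set \<Rightarrow> 'b::order set \<Rightarrow> ('a \<Rightarrow> 'b \<Rightarrow> real) \<Rightarrow> bool" where
  "submodular_on A B f = (\<forall>x1\<in>A. \<forall>x2\<in>A. \<forall>y1\<in>B. \<forall>y2\<in>B. x1 \<le> x2 \<and> y1 \<le> y2 \<longrightarrow>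
      f x1 y2 - f x1 y1 \<ge> f x2 y2 - f x2 y1)"

end

theory Submission
  imports Defs
begin


lemma tele: "1 \<le> m \<Longrightarrow> (\<Sum>z\<in>{2..m}. W z - W (z-1)) = W m - (W (1::nat) :: real)"
proof (induction m)
  case 0 then show ?case by simp
next
  case (Suc m)
  show ?case
  proof (cases "m = 0")
    case True then show ?thesis by simp
  next
    case False
    then have "(\<Sum>z\<in>{2..Suc m}. W z - W (z-1)) = (\<Sum>z\<in>{2..m}. W z - W (z-1)) + (W (Suc m) - W m)"
      by (simp add: sum.cl_ivl_Suc)
    then show ?thesis using Suc False by simp
  qed
qed

lemma abel: "(\<Sum>y\<in>{1..m}. p y * W y) = W 1 * (\<Sum>y\<in>{1..m}. p y) + (\<Sum>z\<in>{2..m}. (W z - W (z-1)) * (\<Sum>w\<in>{z..m}. p w :: real))" for m :: nat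
proof (induction m)
  case 0 then show ?case by simp
next
  case (Suc m)
  show ?case
  proof (cases "m = 0")
    case True then show ?thesis by simp
  next
    case False
    have i: "(\<Sum>z\<in>{2..m}. (W z - W (z-1)) * (\<Sum>w\<in>{z..Suc m}. p w)) = (\<Sum>z\<in>{2..m}. (W z - W (z-1)) * (\<Sum>w\<in>{z..m}. p w)) + (\<Sum>z\<in>{2..m}. (W z - W (z-1))) * p (Suc m)"
      by (simp add: sum.cl_ivl_Suc sum.distrib distrib_left sum_distrib_right)
    have "(\<Sum>z\<in>{2..Suc m}. (W z - W (z-1)) * (\<Sum>w\<in>{z..Suc m}. p w)) = (\<Sum>z\<in>{2..m}. (W z - W (z-1)) * (\<Sum>w\<in>{z..Suc m}. p w)) + (W (Suc m) - W m) * p (Suc m)"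
      using False by (simp add: sum.cl_ivl_Suc)
    then show ?thesis using Suc.IH False i tele[of m W] by (simp add: sum.cl_ivl_Suc algebra_simps) (metis distrib_right mult.commute)
  qed
qed

definition dd1 :: "nat \<Rightarrow> (nat \<Rightarrow> nat \<Rightarrow> nat \<Rightarrow> real) \<Rightarrow> bool" where "dd1 n P \<longleftrightarrow> (\<forall>a\<in>{0,1}. \<forall>x\<in>{1..n}. \<forall>y\<in>{1..n}. x < y \<longrightarrow>
               (\<forall>z\<in>{1..n}. (\<Sum>w\<in>{z..n}. P a x w) \<le> (\<Sum>w\<in>{z..n}. P a y w)))"
definition dd2 :: "nat \<Rightarrow> (nat \<Rightarrow> nat \<Rightarrow> nat \<Rightarrow> real) \<Rightarrow> bool" where "dd2 n P \<longleftrightarrow> (\<forall>z\<in>{1..n}. submodular_on {1..n} {0,1} (\<lambda>x a. \<Sum>w\<in>{z..n}. P a x w))"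
definition dd3 :: "nat \<Rightarrow> (nat \<Rightarrow> nat \<Rightarrow> real) \<Rightarrow> bool" where "dd3 n c \<longleftrightarrow> (\<forall>a\<in>{0,1}. mono_on {1..n} (\<lambda>x. c x a))"
definition dd4 :: "nat \<Rightarrow> (nat \<Rightarrow> nat \<Rightarrow> real) \<Rightarrow> bool" where "dd4 n c \<longleftrightarrow> submodular_on {1..n} {0,1} c"

locale rb =
  fixes n :: nat and P :: "nat \<Rightarrow> nat \<Rightarrow> nat \<Rightarrow> real" and \<beta> :: real
  assumes beta0: "0 < \<beta>" and beta1: "\<beta> < 1"
    and P_nonneg: "\<forall>a\<in>{0,1}. \<forall>x\<in>{1..n}. \<forall>y\<in>{1..n}. 0 \<le> P a x y"
    and P_stoch: "\<forall>a\<in>{0,1}. \<forall>x\<in>{1..n}. (\<Sum>y\<in>{1..n}. P a x y) = 1"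
begin

lemma Pnn: "a \<in> {0,1} \<Longrightarrow> x \<in> {1..n} \<Longrightarrow> y \<in> {1..n} \<Longrightarrow> 0 \<le> P a x y"
  using P_nonneg by blast

lemma Pst: "a \<in> {0,1} \<Longrightarrow> x \<in> {1..n} \<Longrightarrow> (\<Sum>y\<in>{1..n}. P a x y) = 1"
  using P_stoch by blast

lemma mp:
  assumes a: "\<forall>x\<in>{1..n}. a x \<in> {0,1}"
    and e: "\<forall>x\<in>{1..n}. e x \<le> \<beta> * (\<Sum>y\<in>{1..n}. P (a x) x y * e y)"
  shows "\<forall>x\<in>{1..n}. e x \<le> 0"
proof (cases "n = 0")
  case True then show ?thesis by simp
next
  case False
  have fin: "finite (e ` {1..n})" and ne: "e ` {1..n} \<noteq> {}" using False by auto
  obtain x0 where x0: "x0 \<in> {1..n}" "e x0 = Max (e ` {1..n})"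
    using Max_in[OF fin ne] by auto
  have le: "\<And>y. y \<in> {1..n} \<Longrightarrow> e y \<le> e x0" using x0 fin by simp
  have "(\<Sum>y\<in>{1..n}. P (a x0) x0 y * e y) \<le> (\<Sum>y\<in>{1..n}. P (a x0) x0 y * e x0)"
    by (rule sum_mono) (use le Pnn a x0 in \<open>auto intro: mult_left_mono\<close>)
  also have "\<dots> = e x0" using Pst[of "a x0" x0] a x0 by (simp add: sum_distrib_right[symmetric])
  finally have "e x0 \<le> \<beta> * e x0" using e x0 beta0
    by (meson mult_left_mono less_imp_le order_trans)
  then have "e x0 \<le> 0" using beta1 by (smt (verit) mult_le_cancel_right1)
  then show ?thesis using le by fastforce
qed

lemma Pt_nonneg:
  assumes g: "markov_policy n g" and y: "y \<in> {1..n}"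
  shows "0 \<le> Pt n P g t x y"
  using y
proof (induction t arbitrary: y)
  case 0 then show ?case by simp
next
  case (Suc t)
  show ?case using g Suc.prems unfolding markov_policy_def
    by (simp only: Pt.simps, intro sum_nonneg mult_nonneg_nonneg Suc.IH) (use Pnn in auto)
qed

lemma Pt_rowsum:
  assumes g: "markov_policy n g"
  shows "(\<Sum>y\<in>{1..n}. Pt n P g t x y) \<le> 1"
proof (induction t)
  case 0 then show ?case by (simp add: sum.delta)
next
  case (Suc t)
  have "(\<Sum>y\<in>{1..n}. Pt n P g (Suc t) x y) = (\<Sum>z\<in>{1..n}. Pt n P g t x z * (\<Sum>y\<in>{1..n}. P (g z) z y))"
    by (simp add: sum_distrib_left) (rule sum.swap)
  also have "\<dots> = (\<Sum>z\<in>{1..n}. Pt n P g t x z)"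
  proof -
    have "\<forall>z\<in>{1..n}. (\<Sum>y\<in>{1..n}. P (g z) z y) = 1" using g Pst unfolding markov_policy_def by blast
    then show ?thesis by simp
  qed
  finally show ?case using Suc by simp
qed

lemma Pt_le1:
  assumes g: "markov_policy n g" and y: "y \<in> {1..n}"
  shows "Pt n P g t x y \<le> 1"
proof -
  have "Pt n P g t x y \<le> (\<Sum>y\<in>{1..n}. Pt n P g t x y)"
    by (rule member_le_sum) (use y Pt_nonneg[OF g] in auto)
  then show ?thesis using Pt_rowsum[OF g, of t x] by linarith
qed

lemma Pt_left:
  assumes g: "markov_policy n g" and x: "x \<in> {1..n}" and y: "y \<in> {1..n}"
  shows "Pt n P g (Suc t) x y = (\<Sum>z\<in>{1..n}. P (g x) x z * Pt n P g t z y)"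
  using y
proof (induction t arbitrary: y)
  case 0
  have "Pt n P g (Suc 0) x y = (\<Sum>z\<in>{1..n}. Pt n P g 0 x z * P (g z) z y)" by simp
  also have "\<dots> = (\<Sum>z\<in>{1..n}. (if x = z then P (g z) z y else 0))"
    by (rule sum.cong) auto
  also have "\<dots> = P (g x) x y" using x by (simp add: sum.delta)
  also have "\<dots> = (\<Sum>z\<in>{1..n}. (if z = y then P (g x) x z else 0))" using 0 by (simp add: sum.delta')
  also have "\<dots> = (\<Sum>z\<in>{1..n}. P (g x) x z * Pt n P g 0 z y)"
    by (rule sum.cong) auto
  finally show ?case .
next
  case (Suc t)
  have "Pt n P g (Suc (Suc t)) x y = (\<Sum>w\<in>{1..n}. Pt n P g (Suc t) x w * P (g w) w y)" by simp
  also have "\<dots> = (\<Sum>w\<in>{1..n}. (\<Sum>z\<in>{1..n}. P (g x) x z * Pt n P g t z w) * P (g w) w y)"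
    by (rule sum.cong[OF refl], subst Suc.IH) auto
  also have "\<dots> = (\<Sum>z\<in>{1..n}. P (g x) x z * (\<Sum>w\<in>{1..n}. Pt n P g t z w * P (g w) w y))"
    by (simp add: sum_distrib_left sum_distrib_right mult.assoc) (rule sum.swap)
  also have "\<dots> = (\<Sum>z\<in>{1..n}. P (g x) x z * Pt n P g (Suc t) z y)" by simp
  finally show ?case .
qed

definition R where "R g r t x = (\<Sum>y\<in>{1..n}. Pt n P g t x y * r y (g y))"

lemma R_bound:
  assumes g: "markov_policy n g"
  shows "\<bar>R g r t x\<bar> \<le> (\<Sum>y\<in>{1..n}. \<bar>r y (g y)\<bar>)"
  unfolding R_def
proof (rule order_trans[OF sum_abs], rule sum_mono)
  fix y assume y: "y \<in> {1..n}"
  have "\<bar>Pt n P g t x y * r y (g y)\<bar> = Pt n P g t x y * \<bar>r y (g y)\<bar>"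
    using Pt_nonneg[OF g y] by (simp add: abs_mult)
  also have "\<dots> \<le> 1 * \<bar>r y (g y)\<bar>"
    by (rule mult_right_mono) (use Pt_le1[OF g y] in auto)
  finally show "\<bar>Pt n P g t x y * r y (g y)\<bar> \<le> \<bar>r y (g y)\<bar>" by simp
qed

lemma R_summable:
  assumes g: "markov_policy n g"
  shows "summable (\<lambda>t. \<beta> ^ t * R g r t x)"
proof (rule summable_comparison_test)
  let ?B = "(\<Sum>y\<in>{1..n}. \<bar>r y (g y)\<bar>)"
  show "\<exists>N. \<forall>t\<ge>N. norm (\<beta> ^ t * R g r t x) \<le> ?B * \<beta> ^ t"
    using R_bound[OF g] beta0 by (auto simp: abs_mult mult.commute intro!: mult_left_mono)
  show "summable (\<lambda>t. ?B * \<beta> ^ t)"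
    using beta0 beta1 by (intro summable_mult summable_geometric) auto
qed

lemma R_0: assumes x: "x \<in> {1..n}" shows "R g r 0 x = r x (g x)"
proof -
  have "R g r 0 x = (\<Sum>y\<in>{1..n}. (if x = y then r y (g y) else 0))"
    unfolding R_def by (rule sum.cong) auto
  then show ?thesis using x by (simp add: sum.delta)
qed

lemma R_Suc:
  assumes g: "markov_policy n g" and x: "x \<in> {1..n}"
  shows "R g r (Suc t) x = (\<Sum>z\<in>{1..n}. P (g x) x z * R g r t z)"
proof -
  have "R g r (Suc t) x = (\<Sum>y\<in>{1..n}. (\<Sum>z\<in>{1..n}. P (g x) x z * Pt n P g t z y) * r y (g y))"
    unfolding R_def by (rule sum.cong[OF refl], subst Pt_left[OF g x]) auto
  also have "\<dots> = (\<Sum>z\<in>{1..n}. P (g x) x z * R g r t z)"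
    unfolding R_def by (simp add: sum_distrib_left sum_distrib_right mult.assoc) (rule sum.swap)
  finally show ?thesis .
qed

lemma dv_R: "disc_val n P \<beta> g r x = (1 - \<beta>) * (\<Sum>t. \<beta> ^ t * R g r t x)"
  unfolding disc_val_def R_def ..

lemma dv_eq:
  assumes g: "markov_policy n g" and x: "x \<in> {1..n}"
  shows "disc_val n P \<beta> g r x = (1 - \<beta>) * r x (g x) + \<beta> * (\<Sum>z\<in>{1..n}. P (g x) x z * disc_val n P \<beta> g r z)"
proof -
  let ?S = "\<lambda>x. (\<Sum>t. \<beta> ^ t * R g r t x)"
  have "(\<Sum>t. \<beta> ^ Suc t * R g r (Suc t) x) = ?S x - \<beta> ^ 0 * R g r 0 x"
    by (rule suminf_split_head[OF R_summable[OF g]])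
  moreover have "(\<Sum>t. \<beta> ^ Suc t * R g r (Suc t) x) = (\<Sum>t. \<beta> * (\<Sum>z\<in>{1..n}. P (g x) x z * (\<beta> ^ t * R g r t z)))"
    by (simp add: R_Suc[OF g x] sum_distrib_left mult_ac)
  moreover have "\<dots> = \<beta> * (\<Sum>t. (\<Sum>z\<in>{1..n}. P (g x) x z * (\<beta> ^ t * R g r t z)))"
    by (rule suminf_mult) (intro summable_sum summable_mult R_summable[OF g])
  moreover have "(\<Sum>t. (\<Sum>z\<in>{1..n}. P (g x) x z * (\<beta> ^ t * R g r t z))) = (\<Sum>z\<in>{1..n}. (\<Sum>t. P (g x) x z * (\<beta> ^ t * R g r t z)))"
    by (rule suminf_sum) (intro summable_mult R_summable[OF g])
  moreover have "\<dots> = (\<Sum>z\<in>{1..n}. P (g x) x z * ?S z)"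
    by (intro sum.cong refl suminf_mult R_summable[OF g])
  ultimately have "?S x = r x (g x) + \<beta> * (\<Sum>z\<in>{1..n}. P (g x) x z * ?S z)"
    using R_0[OF x] by simp
  then show ?thesis unfolding dv_R
    by (simp add: algebra_simps sum_distrib_left)
qed

lemma dv_lin:
  assumes g: "markov_policy n g"
  shows "disc_val n P \<beta> g (\<lambda>y a. r1 y a + k * r2 y a) x = disc_val n P \<beta> g r1 x + k * disc_val n P \<beta> g r2 x"
proof -
  have "R g (\<lambda>y a. r1 y a + k * r2 y a) t x = R g r1 t x + k * R g r2 t x" for t
    unfolding R_def by (simp add: algebra_simps sum.distrib sum_distrib_left)
  then have "(\<Sum>t. \<beta> ^ t * R g (\<lambda>y a. r1 y a + k * r2 y a) t x) = (\<Sum>t. \<beta> ^ t * R g r1 t x + k * (\<beta> ^ t * R g r2 t x))"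
    by (simp add: algebra_simps)
  also have "\<dots> = (\<Sum>t. \<beta> ^ t * R g r1 t x) + (\<Sum>t. k * (\<beta> ^ t * R g r2 t x))"
    by (rule suminf_add[symmetric]) (intro R_summable[OF g] summable_mult)+
  also have "\<dots> = (\<Sum>t. \<beta> ^ t * R g r1 t x) + k * (\<Sum>t. \<beta> ^ t * R g r2 t x)"
    by (subst suminf_mult) (intro R_summable[OF g], simp)
  finally show ?thesis unfolding dv_R by (simp add: algebra_simps)
qed

lemma pe_unique:
  assumes g: "markov_policy n g"
    and v: "\<forall>x\<in>{1..n}. v x = (1 - \<beta>) * rr x + \<beta> * (\<Sum>y\<in>{1..n}. P (g x) x y * v y)"
    and w: "\<forall>x\<in>{1..n}. w x = (1 - \<beta>) * rr x + \<beta> * (\<Sum>y\<in>{1..n}. P (g x) x y * w y)"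
  shows "\<forall>x\<in>{1..n}. v x = w x"
proof -
  have "\<forall>x\<in>{1..n}. \<bar>v x - w x\<bar> \<le> 0"
  proof (rule mp[of g])
    show "\<forall>x\<in>{1..n}. g x \<in> {0, 1}" using g unfolding markov_policy_def .
    show "\<forall>x\<in>{1..n}. \<bar>v x - w x\<bar> \<le> \<beta> * (\<Sum>y\<in>{1..n}. P (g x) x y * \<bar>v y - w y\<bar>)"
    proof
      fix x assume x: "x \<in> {1..n}"
      have e1: "(\<Sum>y\<in>{1..n}. P (g x) x y * (v y - w y)) = (\<Sum>y\<in>{1..n}. P (g x) x y * v y) - (\<Sum>y\<in>{1..n}. P (g x) x y * w y)"
        by (simp add: right_diff_distrib sum_subtractf)
      have "v x - w x = \<beta> * (\<Sum>y\<in>{1..n}. P (g x) x y * v y) - \<beta> * (\<Sum>y\<in>{1..n}. P (g x) x y * w y)"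
        using v w x by auto
      then have "v x - w x = \<beta> * (\<Sum>y\<in>{1..n}. P (g x) x y * (v y - w y))"
        unfolding e1 by (simp add: right_diff_distrib)
      then have "\<bar>v x - w x\<bar> = \<beta> * \<bar>\<Sum>y\<in>{1..n}. P (g x) x y * (v y - w y)\<bar>"
        using beta0 by (simp add: abs_mult)
      also have "\<dots> \<le> \<beta> * (\<Sum>y\<in>{1..n}. P (g x) x y * \<bar>v y - w y\<bar>)"
      proof (rule mult_left_mono[OF _ less_imp_le[OF beta0]])
        have "\<bar>\<Sum>y\<in>{1..n}. P (g x) x y * (v y - w y)\<bar> \<le> (\<Sum>y\<in>{1..n}. \<bar>P (g x) x y * (v y - w y)\<bar>)"
          by (rule sum_abs)
        also have "\<dots> = (\<Sum>y\<in>{1..n}. P (g x) x y * \<bar>v y - w y\<bar>)"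
          using g x Pnn unfolding markov_policy_def by (intro sum.cong refl) (auto simp: abs_mult)
        finally show "\<bar>\<Sum>y\<in>{1..n}. P (g x) x y * (v y - w y)\<bar> \<le> (\<Sum>y\<in>{1..n}. P (g x) x y * \<bar>v y - w y\<bar>)" .
      qed
      finally show "\<bar>v x - w x\<bar> \<le> \<beta> * (\<Sum>y\<in>{1..n}. P (g x) x y * \<bar>v y - w y\<bar>)" .
    qed
  qed
  then show ?thesis by auto
qed

section \<open>Bellman\<close>

definition fixpt where
  "fixpt c lam V \<longleftrightarrow> (\<forall>x\<in>{1..n}. V x = min (Hq n P c \<beta> lam V x 0) (Hq n P c \<beta> lam V x 1))
      \<and> (\<forall>x. x \<notin> {1..n} \<longrightarrow> V x = 0)"

definition Tb where
  "Tb c lam W = (\<lambda>x. if x \<in> {1..n} then min (Hq n P c \<beta> lam W x 0) (Hq n P c \<beta> lam W x 1) else 0)"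

definition VI where "VI c lam k = (Tb c lam ^^ k) (\<lambda>_. 0)"

lemma VI_Suc: "VI c lam (Suc k) = Tb c lam (VI c lam k)"
  unfolding VI_def by simp

lemma Hq_diff:
  assumes a: "a \<in> {0,1}" and x: "x \<in> {1..n}"
  shows "\<bar>Hq n P c \<beta> lam V x a - Hq n P c \<beta> lam W x a\<bar> \<le> \<beta> * (\<Sum>y\<in>{1..n}. P a x y * \<bar>V y - W y\<bar>)"
proof -
  have e1: "Hq n P c \<beta> lam V x a - Hq n P c \<beta> lam W x a = \<beta> * (\<Sum>y\<in>{1..n}. P a x y * (V y - W y))"
    unfolding Hq_def by (simp add: right_diff_distrib sum_subtractf)
  have "\<bar>\<Sum>y\<in>{1..n}. P a x y * (V y - W y)\<bar> \<le> (\<Sum>y\<in>{1..n}. \<bar>P a x y * (V y - W y)\<bar>)"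
    by (rule sum_abs)
  also have "\<dots> = (\<Sum>y\<in>{1..n}. P a x y * \<bar>V y - W y\<bar>)"
    using a x Pnn by (intro sum.cong refl) (auto simp: abs_mult)
  finally show ?thesis unfolding e1 using beta0 by (simp add: abs_mult mult_left_mono)
qed

lemma Pavg_le:
  assumes a: "a \<in> {0,1}" and x: "x \<in> {1..n}" and K: "\<forall>y\<in>{1..n}. f y \<le> K"
  shows "(\<Sum>y\<in>{1..n}. P a x y * f y) \<le> K"
proof -
  have "(\<Sum>y\<in>{1..n}. P a x y * f y) \<le> (\<Sum>y\<in>{1..n}. P a x y * K)"
    using a x K Pnn by (intro sum_mono mult_left_mono) auto
  also have "\<dots> = K" using Pst[OF a x] by (simp add: sum_distrib_right[symmetric])
  finally show ?thesis .
qed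

lemma Pavg_ge:
  assumes a: "a \<in> {0,1}" and x: "x \<in> {1..n}" and K: "\<forall>y\<in>{1..n}. K \<le> f y"
  shows "K \<le> (\<Sum>y\<in>{1..n}. P a x y * f y)"
proof -
  have "(\<Sum>y\<in>{1..n}. P a x y * K) \<le> (\<Sum>y\<in>{1..n}. P a x y * f y)"
    using a x K Pnn by (intro sum_mono mult_left_mono) auto
  moreover have "(\<Sum>y\<in>{1..n}. P a x y * K) = K" using Pst[OF a x] by (simp add: sum_distrib_right[symmetric])
  ultimately show ?thesis by simp
qed

lemma min_diff: "\<bar>min (a::real) b - min c d\<bar> \<le> max \<bar>a - c\<bar> \<bar>b - d\<bar>"
  by (simp add: min_def max_def abs_if split: if_splits)

lemma Hq_contr:
  assumes a: "a \<in> {0,1}" and x: "x \<in> {1..n}" and K: "\<forall>y\<in>{1..n}. \<bar>V y - W y\<bar> \<le> K"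
  shows "\<bar>Hq n P c \<beta> lam V x a - Hq n P c \<beta> lam W x a\<bar> \<le> \<beta> * K"
  using Hq_diff[OF a x, of c lam V W] Pavg_le[OF a x K] beta0
  by (smt (verit, best) mult_left_mono)

lemma Tb_contr:
  assumes K: "\<forall>y\<in>{1..n}. \<bar>V y - W y\<bar> \<le> K" and K0: "0 \<le> K"
  shows "\<bar>Tb c lam V x - Tb c lam W x\<bar> \<le> \<beta> * K"
proof (cases "x \<in> {1..n}")
  case True
  have "\<bar>Tb c lam V x - Tb c lam W x\<bar> \<le> max \<bar>Hq n P c \<beta> lam V x 0 - Hq n P c \<beta> lam W x 0\<bar> \<bar>Hq n P c \<beta> lam V x 1 - Hq n P c \<beta> lam W x 1\<bar>"
    using True unfolding Tb_def by (simp add: min_diff)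
  also have "\<dots> \<le> \<beta> * K" using Hq_contr[OF _ True K] by simp
  finally show ?thesis .
next
  case False then show ?thesis unfolding Tb_def if_not_P[OF False] using K0 beta0 by simp
qed

lemma fixpt_unique:
  assumes V: "fixpt c lam V" and W: "fixpt c lam W"
  shows "V = W"
proof -
  have "\<forall>x\<in>{1..n}. \<bar>V x - W x\<bar> \<le> 0"
  proof (rule mp[where a="\<lambda>x. if \<bar>Hq n P c \<beta> lam V x 0 - Hq n P c \<beta> lam W x 0\<bar> \<le> \<bar>Hq n P c \<beta> lam V x 1 - Hq n P c \<beta> lam W x 1\<bar> then 1 else 0"])
    show "\<forall>x\<in>{1..n}. (if \<bar>Hq n P c \<beta> lam V x 0 - Hq n P c \<beta> lam W x 0\<bar> \<le> \<bar>Hq n P c \<beta> lam V x 1 - Hq n P c \<beta> lam W x 1\<bar> then 1 else 0) \<in> {0, 1::nat}"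
      by auto
    show "\<forall>x\<in>{1..n}. \<bar>V x - W x\<bar> \<le> \<beta> * (\<Sum>y\<in>{1..n}. P (if \<bar>Hq n P c \<beta> lam V x 0 - Hq n P c \<beta> lam W x 0\<bar> \<le> \<bar>Hq n P c \<beta> lam V x 1 - Hq n P c \<beta> lam W x 1\<bar> then 1 else 0) x y * \<bar>V y - W y\<bar>)"
    proof
      fix x assume x: "x \<in> {1..n}"
      have "\<bar>V x - W x\<bar> \<le> max \<bar>Hq n P c \<beta> lam V x 0 - Hq n P c \<beta> lam W x 0\<bar> \<bar>Hq n P c \<beta> lam V x 1 - Hq n P c \<beta> lam W x 1\<bar>"
        using V W x unfolding fixpt_def by (metis min_diff)
      then show "\<bar>V x - W x\<bar> \<le> \<beta> * (\<Sum>y\<in>{1..n}. P (if \<bar>Hq n P c \<beta> lam V x 0 - Hq n P c \<beta> lam W x 0\<bar> \<le> \<bar>Hq n P c \<beta> lam V x 1 - Hq n P c \<beta> lam W x 1\<bar> then 1 else 0) x y * \<bar>V y - W y\<bar>)"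
        using Hq_diff[OF _ x, of 0 c lam V W] Hq_diff[OF _ x, of 1 c lam V W]
        by (auto simp: max_def split: if_splits)
    qed
  qed
  then show ?thesis using V W unfolding fixpt_def by (intro ext) (metis abs_le_zero_iff eq_iff_diff_eq_0)
qed

definition BB where "BB c lam = (\<Sum>x\<in>{1..n}. \<bar>Tb c lam (\<lambda>_. 0) x\<bar>)"

lemma BB: "\<bar>Tb c lam (\<lambda>_. 0) x\<bar> \<le> BB c lam"
proof (cases "x \<in> {1..n}")
  case True then show ?thesis unfolding BB_def
    using member_le_sum[of x "{1..n}" "\<lambda>x. \<bar>Tb c lam (\<lambda>_. 0) x\<bar>"] by simp
next
  case False then show ?thesis unfolding BB_def Tb_def if_not_P[OF False] by (simp add: sum_nonneg)
qed

lemma VI_step: "\<bar>VI c lam (Suc k) x - VI c lam k x\<bar> \<le> \<beta> ^ k * BB c lam"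
proof (induction k arbitrary: x)
  case 0 then show ?case using BB by (simp add: VI_def)
next
  case (Suc k)
  have "\<bar>Tb c lam (VI c lam (Suc k)) x - Tb c lam (VI c lam k) x\<bar> \<le> \<beta> * (\<beta> ^ k * BB c lam)"
    by (rule Tb_contr) (use Suc.IH BB[of c lam 0] in \<open>auto intro: order_trans[OF abs_ge_zero]\<close>)
  then show ?case by (simp add: VI_Suc)
qed

definition Vl where "Vl c lam x = (\<Sum>k. VI c lam (Suc k) x - VI c lam k x)"

lemma VI_summable: "summable (\<lambda>k. VI c lam (Suc k) x - VI c lam k x)"
proof (rule summable_comparison_test)
  show "\<exists>N. \<forall>k\<ge>N. norm (VI c lam (Suc k) x - VI c lam k x) \<le> BB c lam * \<beta> ^ k"
    using VI_step by (auto simp: mult.commute)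
  show "summable (\<lambda>k. BB c lam * \<beta> ^ k)"
    using beta0 beta1 by (intro summable_mult summable_geometric) auto
qed

lemma VI_lim: "(\<lambda>k. VI c lam k x) \<longlonglongrightarrow> Vl c lam x"
proof -
  have "(\<lambda>k. \<Sum>j<k. VI c lam (Suc j) x - VI c lam j x) \<longlonglongrightarrow> Vl c lam x"
    unfolding Vl_def by (rule summable_LIMSEQ[OF VI_summable])
  moreover have "(\<Sum>j<k. VI c lam (Suc j) x - VI c lam j x) = VI c lam k x" for k
    by (subst sum_lessThan_telescope) (simp add: VI_def)
  ultimately show ?thesis by simp
qed

lemma Vl_fixpt: "fixpt c lam (Vl c lam)"
  unfolding fixpt_def
proof safe
  fix x assume x: "x \<in> {1..n}"
  have "(\<lambda>k. VI c lam (Suc k) x) \<longlonglongrightarrow> Vl c lam x" by (rule LIMSEQ_Suc[OF VI_lim])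
  moreover have "(\<lambda>k. VI c lam (Suc k) x) \<longlonglongrightarrow> min (Hq n P c \<beta> lam (Vl c lam) x 0) (Hq n P c \<beta> lam (Vl c lam) x 1)"
    unfolding VI_Suc Tb_def Hq_def using x
    by (simp, intro tendsto_intros VI_lim)
  ultimately show "Vl c lam x = min (Hq n P c \<beta> lam (Vl c lam) x 0) (Hq n P c \<beta> lam (Vl c lam) x 1)"
    by (rule LIMSEQ_unique)
next
  fix x assume x: "x \<notin> {1..n}"
  have "VI c lam (Suc k) x - VI c lam k x = 0" for k
    using x by (cases k) (auto simp: VI_Suc Tb_def VI_def)
  then show "Vl c lam x = 0" unfolding Vl_def by simp
qed

lemma Vlam_eq: "Vlam n P c \<beta> lam = Vl c lam"
  unfolding Vlam_def
proof (rule the_equality)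
  show "(\<forall>x\<in>{1..n}. Vl c lam x = min (Hq n P c \<beta> lam (Vl c lam) x 0) (Hq n P c \<beta> lam (Vl c lam) x 1)) \<and>
    (\<forall>x. x \<notin> {1..n} \<longrightarrow> Vl c lam x = 0)" using Vl_fixpt[of c lam] unfolding fixpt_def .
  fix V assume "(\<forall>x\<in>{1..n}. V x = min (Hq n P c \<beta> lam V x 0) (Hq n P c \<beta> lam V x 1)) \<and>
    (\<forall>x. x \<notin> {1..n} \<longrightarrow> V x = 0)"
  then have "fixpt c lam V" unfolding fixpt_def .
  then show "V = Vl c lam" using fixpt_unique Vl_fixpt by blast
qed

lemma Vlam_fixpt: "fixpt c lam (Vlam n P c \<beta> lam)"
  using Vlam_eq Vl_fixpt by simp

section \<open>Monotonicity\<close>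

lemma Pabel:
  assumes a: "a \<in> {0,1}" and x: "x \<in> {1..n}"
  shows "(\<Sum>y\<in>{1..n}. P a x y * W y) = W 1 + (\<Sum>z\<in>{2..n}. (W z - W (z-1)) * (\<Sum>w\<in>{z..n}. P a x w))"
  using abel[of "P a x" W n] Pst[OF a x] by simp

lemma Pmono:
  assumes d1: "dd1 n P" and a: "a \<in> {0,1}" and x: "x \<in> {1..n}" and y: "y \<in> {1..n}" and xy: "x \<le> y"
    and W: "mono_on {1..n} W"
  shows "(\<Sum>w\<in>{1..n}. P a x w * W w) \<le> (\<Sum>w\<in>{1..n}. P a y w * W w)"
  unfolding Pabel[OF a x] Pabel[OF a y]
proof (rule add_left_mono, rule sum_mono)
  fix z assume z: "z \<in> {2..n}"
  have zz: "z - 1 \<in> {1..n}" "z \<in> {1..n}" "z - 1 \<le> z" using z by auto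
  have "W (z-1) \<le> W z" using mono_onD[OF W zz] .
  then have "0 \<le> W z - W (z-1)" by simp
  moreover have "(\<Sum>w\<in>{z..n}. P a x w) \<le> (\<Sum>w\<in>{z..n}. P a y w)"
  proof (cases "x = y")
    case False then show ?thesis using d1 a x y xy z unfolding dd1_def by auto
  qed simp
  ultimately show "(W z - W (z-1)) * (\<Sum>w\<in>{z..n}. P a x w) \<le> (W z - W (z-1)) * (\<Sum>w\<in>{z..n}. P a y w)"
    by (rule mult_left_mono[rotated])
qed

lemma Hq_mono:
  assumes d1: "dd1 n P" and d3: "dd3 n c" and a: "a \<in> {0,1}" and x: "x \<in> {1..n}" and y: "y \<in> {1..n}" and xy: "x \<le> y"
    and W: "mono_on {1..n} W"
  shows "Hq n P c \<beta> lam W x a \<le> Hq n P c \<beta> lam W y a"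
proof -
  have "mono_on {1..n} (\<lambda>x. c x a)" using d3 a unfolding dd3_def by blast
  from mono_onD[OF this x y xy] have "c x a \<le> c y a" .
  then have "(1 - \<beta>) * (c x a + lam * real a) \<le> (1 - \<beta>) * (c y a + lam * real a)"
    using beta1 by (intro mult_left_mono) auto
  moreover have "\<beta> * (\<Sum>w\<in>{1..n}. P a x w * W w) \<le> \<beta> * (\<Sum>w\<in>{1..n}. P a y w * W w)"
    using Pmono[OF d1 a x y xy W] beta0 by (intro mult_left_mono) auto
  ultimately show ?thesis unfolding Hq_def by simp
qed

lemma Tb_mono:
  assumes d1: "dd1 n P" and d3: "dd3 n c" and W: "mono_on {1..n} W"
  shows "mono_on {1..n} (Tb c lam W)"
proof (rule mono_onI)
  fix x y assume x: "x \<in> {1..n}" and y: "y \<in> {1..n}" and xy: "x \<le> y"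
  show "Tb c lam W x \<le> Tb c lam W y"
    unfolding Tb_def if_P[OF x] if_P[OF y]
    using Hq_mono[OF d1 d3 _ x y xy W, of 0 lam] Hq_mono[OF d1 d3 _ x y xy W, of 1 lam]
    by (intro min.mono) auto
qed

lemma VI_mono:
  assumes d1: "dd1 n P" and d3: "dd3 n c"
  shows "mono_on {1..n} (VI c lam k)"
proof (induction k)
  case 0 then show ?case by (simp add: VI_def mono_on_def)
next
  case (Suc k) then show ?case unfolding VI_Suc by (rule Tb_mono[OF d1 d3])
qed

lemma V_mono:
  assumes d1: "dd1 n P" and d3: "dd3 n c"
  shows "mono_on {1..n} (Vlam n P c \<beta> lam)"
  unfolding Vlam_eq
proof (rule mono_onI)
  fix x y assume x: "x \<in> {1..n}" and y: "y \<in> {1..n}" and xy: "x \<le> y"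
  show "Vl c lam x \<le> Vl c lam y"
    by (rule LIMSEQ_le[OF VI_lim VI_lim]) (use mono_onD[OF VI_mono[OF d1 d3] x y xy] in blast)
qed

definition Dq where
  "Dq c lam x = Hq n P c \<beta> lam (Vlam n P c \<beta> lam) x 1 - Hq n P c \<beta> lam (Vlam n P c \<beta> lam) x 0"

lemma Dq_form:
  assumes x: "x \<in> {1..n}"
  shows "Dq c lam x = (1 - \<beta>) * (c x 1 - c x 0 + lam) + \<beta> * (\<Sum>z\<in>{2..n}. (Vlam n P c \<beta> lam z - Vlam n P c \<beta> lam (z-1)) * ((\<Sum>w\<in>{z..n}. P 1 x w) - (\<Sum>w\<in>{z..n}. P 0 x w)))"
proof -
  have a0: "(0::nat) \<in> {0,1}" and a1: "(1::nat) \<in> {0,1}" by auto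
  show ?thesis
  unfolding Dq_def Hq_def Pabel[OF a1 x] Pabel[OF a0 x]
  by (simp add: algebra_simps sum_subtractf sum.distrib)
qed

lemma Dq_antimono:
  assumes d1: "dd1 n P" and d2: "dd2 n P" and d3: "dd3 n c" and d4: "dd4 n c"
    and x: "x \<in> {1..n}" and y: "y \<in> {1..n}" and xy: "x \<le> y"
  shows "Dq c lam y \<le> Dq c lam x"
  unfolding Dq_form[OF x] Dq_form[OF y]
proof (rule add_mono)
  have "c y 1 - c y 0 \<le> c x 1 - c x 0" using d4 x y xy unfolding dd4_def submodular_on_def by auto
  then show "(1 - \<beta>) * (c y 1 - c y 0 + lam) \<le> (1 - \<beta>) * (c x 1 - c x 0 + lam)"
    using beta1 by (intro mult_left_mono) auto
  show "\<beta> * (\<Sum>z\<in>{2..n}. (Vlam n P c \<beta> lam z - Vlam n P c \<beta> lam (z-1)) * ((\<Sum>w\<in>{z..n}. P 1 y w) - (\<Sum>w\<in>{z..n}. P 0 y w)))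
    \<le> \<beta> * (\<Sum>z\<in>{2..n}. (Vlam n P c \<beta> lam z - Vlam n P c \<beta> lam (z-1)) * ((\<Sum>w\<in>{z..n}. P 1 x w) - (\<Sum>w\<in>{z..n}. P 0 x w)))"
  proof (rule mult_left_mono[OF sum_mono], rule mult_left_mono)
    fix z assume z: "z \<in> {2..n}"
    have "submodular_on {1..n} {0,1} (\<lambda>x a. \<Sum>w\<in>{z..n}. P a x w)" using d2 z unfolding dd2_def by auto
    then show "(\<Sum>w\<in>{z..n}. P 1 y w) - (\<Sum>w\<in>{z..n}. P 0 y w) \<le> (\<Sum>w\<in>{z..n}. P 1 x w) - (\<Sum>w\<in>{z..n}. P 0 x w)"
      using x y xy unfolding submodular_on_def by auto
    show "0 \<le> Vlam n P c \<beta> lam z - Vlam n P c \<beta> lam (z-1)"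
    proof -
      have zz: "z - 1 \<in> {1..n}" "z \<in> {1..n}" "z - 1 \<le> z" using z by auto
      show ?thesis using mono_onD[OF V_mono[OF d1 d3, of lam] zz] by simp
    qed
  qed (use beta0 in auto)
qed

section \<open>Optimality\<close>

abbreviation V where "V c lam \<equiv> Vlam n P c \<beta> lam"

lemma V_eq: "x \<in> {1..n} \<Longrightarrow> V c lam x = min (Hq n P c \<beta> lam (V c lam) x 0) (Hq n P c \<beta> lam (V c lam) x 1)"
  using Vlam_fixpt unfolding fixpt_def by blast

lemma J_eq:
  assumes g: "markov_policy n g" and x: "x \<in> {1..n}"
  shows "Jlam n P c \<beta> lam g x = (1 - \<beta>) * (c x (g x) + lam * real (g x)) + \<beta> * (\<Sum>z\<in>{1..n}. P (g x) x z * Jlam n P c \<beta> lam g z)"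
  unfolding Jlam_def by (rule dv_eq[OF g x])

definition greedy where
  "greedy c lam g \<longleftrightarrow> markov_policy n g \<and> (\<forall>x\<in>{1..n}. Hq n P c \<beta> lam (V c lam) x (g x) = V c lam x)"

lemma greedy_J:
  assumes gr: "greedy c lam g"
  shows "\<forall>x\<in>{1..n}. Jlam n P c \<beta> lam g x = V c lam x"
proof (rule pe_unique)
  show g: "markov_policy n g" using gr unfolding greedy_def by blast
  show "\<forall>x\<in>{1..n}. Jlam n P c \<beta> lam g x = (1 - \<beta>) * (c x (g x) + lam * real (g x)) + \<beta> * (\<Sum>y\<in>{1..n}. P (g x) x y * Jlam n P c \<beta> lam g y)"
    using J_eq[OF g] by blast
  show "\<forall>x\<in>{1..n}. V c lam x = (1 - \<beta>) * (c x (g x) + lam * real (g x)) + \<beta> * (\<Sum>y\<in>{1..n}. P (g x) x y * V c lam y)"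
    using gr unfolding greedy_def Hq_def by auto
qed

lemma J_ge_V:
  assumes g: "markov_policy n g"
  shows "\<forall>x\<in>{1..n}. V c lam x \<le> Jlam n P c \<beta> lam g x"
proof -
  have "\<forall>x\<in>{1..n}. V c lam x - Jlam n P c \<beta> lam g x \<le> 0"
  proof (rule mp[of g])
    show "\<forall>x\<in>{1..n}. g x \<in> {0, 1}" using g unfolding markov_policy_def .
    show "\<forall>x\<in>{1..n}. V c lam x - Jlam n P c \<beta> lam g x \<le> \<beta> * (\<Sum>y\<in>{1..n}. P (g x) x y * (V c lam y - Jlam n P c \<beta> lam g y))"
    proof
      fix x assume x: "x \<in> {1..n}"
      have gx: "g x \<in> {0,1}" using g x unfolding markov_policy_def by blast
      have "V c lam x \<le> Hq n P c \<beta> lam (V c lam) x (g x)"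
        using V_eq[OF x, of c lam] gx by auto
      then show "V c lam x - Jlam n P c \<beta> lam g x \<le> \<beta> * (\<Sum>y\<in>{1..n}. P (g x) x y * (V c lam y - Jlam n P c \<beta> lam g y))"
        unfolding J_eq[OF g x] Hq_def by (simp add: right_diff_distrib sum_subtractf)
    qed
  qed
  then show ?thesis by auto
qed

lemma greedy_opt:
  assumes gr: "greedy c lam g"
  shows "optimal n P c \<beta> lam g"
  unfolding optimal_def
  using gr greedy_J[OF gr] J_ge_V unfolding greedy_def by auto

lemma opt_J:
  assumes opt: "optimal n P c \<beta> lam g" and gr: "greedy c lam g0"
  shows "\<forall>x\<in>{1..n}. Jlam n P c \<beta> lam g x = V c lam x"
proof -
  have m0: "markov_policy n g0" using gr unfolding greedy_def by blast
  have g: "markov_policy n g" using opt unfolding optimal_def by blast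
  show ?thesis using opt m0 greedy_J[OF gr] J_ge_V[OF g] unfolding optimal_def
    by (metis order_antisym)
qed

lemma opt_greedy:
  assumes opt: "optimal n P c \<beta> lam g" and gr: "greedy c lam g0"
  shows "greedy c lam g"
proof -
  have g: "markov_policy n g" using opt unfolding optimal_def by blast
  have JV: "\<forall>x\<in>{1..n}. Jlam n P c \<beta> lam g x = V c lam x" by (rule opt_J[OF opt gr])
  have "Hq n P c \<beta> lam (V c lam) x (g x) = V c lam x" if x: "x \<in> {1..n}" for x
  proof -
    have "(\<Sum>y\<in>{1..n}. P (g x) x y * V c lam y) = (\<Sum>y\<in>{1..n}. P (g x) x y * Jlam n P c \<beta> lam g y)"
      using JV by (intro sum.cong) auto
    then show ?thesis unfolding Hq_def using J_eq[OF g x, of c lam] JV x by simp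
  qed
  then show ?thesis unfolding greedy_def using g by blast
qed

lemma thr_markov: "markov_policy n (thr k)"
  unfolding markov_policy_def thr_def by auto

lemma greedy_thr_iff:
  "greedy c lam (thr k) \<longleftrightarrow> (\<forall>x\<in>{1..n}. (x \<le> k \<longrightarrow> 0 \<le> Dq c lam x) \<and> (k < x \<longrightarrow> Dq c lam x \<le> 0))"
  unfolding greedy_def Dq_def thr_def using V_eq[of _ c lam] thr_markov[of k, unfolded thr_def]
  by (auto simp: min_def split: if_splits)

definition kk where "kk c lam = (if {x\<in>{1..n}. 0 < Dq c lam x} = {} then 0 else Max {x\<in>{1..n}. 0 < Dq c lam x})"

lemma kk_range: "kk c lam \<in> {0..n}"
proof (cases "{x\<in>{1..n}. 0 < Dq c lam x} = {}")
  case False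
  then have "Max {x\<in>{1..n}. 0 < Dq c lam x} \<in> {x\<in>{1..n}. 0 < Dq c lam x}" by (intro Max_in) auto
  then show ?thesis using False unfolding kk_def by auto
qed (simp add: kk_def)

lemma kk_char:
  assumes d1: "dd1 n P" and d2: "dd2 n P" and d3: "dd3 n c" and d4: "dd4 n c" and x: "x \<in> {1..n}"
  shows "0 < Dq c lam x \<longleftrightarrow> x \<le> kk c lam"
proof (cases "{x\<in>{1..n}. 0 < Dq c lam x} = {}")
  case True
  then show ?thesis using x unfolding kk_def by auto
next
  case False
  let ?S = "{x\<in>{1..n}. 0 < Dq c lam x}"
  have fin: "finite ?S" by simp
  have M: "Max ?S \<in> ?S" using False by (intro Max_in) auto
  show ?thesis
  proof
    assume "0 < Dq c lam x" then show "x \<le> kk c lam" using x False fin unfolding kk_def by auto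
  next
    assume "x \<le> kk c lam"
    moreover have "kk c lam = Max ?S" unfolding kk_def if_not_P[OF False] by (rule refl)
    ultimately have "x \<le> Max ?S" by simp
    then have "Dq c lam (Max ?S) \<le> Dq c lam x" using M x by (intro Dq_antimono[OF d1 d2 d3 d4]) auto
    then show "0 < Dq c lam x" using M by auto
  qed
qed

lemma kk_greedy:
  assumes d1: "dd1 n P" and d2: "dd2 n P" and d3: "dd3 n c" and d4: "dd4 n c"
  shows "greedy c lam (thr (kk c lam))"
  unfolding greedy_thr_iff using kk_char[OF d1 d2 d3 d4] by (meson less_imp_le not_le)

lemma passive_char:
  assumes d1: "dd1 n P" and d2: "dd2 n P" and d3: "dd3 n c" and d4: "dd4 n c"
  shows "passive_set n P c \<beta> lam = {x\<in>{1..n}. x \<le> kk c lam}"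
  unfolding passive_set_def using kk_char[OF d1 d2 d3 d4, of _ lam] unfolding Dq_def by auto

section \<open>Bounds and continuity\<close>

definition KK :: "(nat \<Rightarrow> nat \<Rightarrow> real) \<Rightarrow> real" where "KK c = (\<Sum>x\<in>{1..n}. \<bar>c x 0\<bar> + \<bar>c x 1\<bar>)"

lemma KK: assumes x: "x \<in> {1..n}" and a: "a \<in> {0,1}" shows "\<bar>c x a\<bar> \<le> KK c"
proof -
  have "\<bar>c x a\<bar> \<le> \<bar>c x 0\<bar> + \<bar>c x 1\<bar>" using a abs_ge_zero[of "c x 0"] abs_ge_zero[of "c x 1"] by auto
  also have "\<dots> \<le> KK c" unfolding KK_def using x
    by (intro member_le_sum[of x "{1..n}" "\<lambda>x. \<bar>c x 0\<bar> + \<bar>c x 1\<bar>"]) auto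
  finally show ?thesis .
qed

lemma V_upper: "\<forall>x\<in>{1..n}. V c lam x \<le> min lam 0 + KK c"
proof -
  let ?a = "if 0 \<le> lam then 0 else 1 :: nat"
  have "\<forall>x\<in>{1..n}. V c lam x - (min lam 0 + KK c) \<le> 0"
  proof (rule mp[where a="\<lambda>_. ?a"])
    show "\<forall>x\<in>{1..n}. ?a \<in> {0,1}" by auto
    show "\<forall>x\<in>{1..n}. V c lam x - (min lam 0 + KK c) \<le> \<beta> * (\<Sum>y\<in>{1..n}. P ?a x y * (V c lam y - (min lam 0 + KK c)))"
    proof
      fix x assume x: "x \<in> {1..n}"
      have a: "?a \<in> {0,1}" by auto
      have "V c lam x \<le> Hq n P c \<beta> lam (V c lam) x ?a" using V_eq[OF x, of c lam] by auto
      moreover have "c x ?a + lam * real ?a \<le> min lam 0 + KK c" using KK[OF x a, of c] by auto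
      then have "(1 - \<beta>) * (c x ?a + lam * real ?a) \<le> (1 - \<beta>) * (min lam 0 + KK c)"
        using beta1 by (intro mult_left_mono) auto
      moreover have "(\<Sum>y\<in>{1..n}. P ?a x y * (V c lam y - (min lam 0 + KK c))) = (\<Sum>y\<in>{1..n}. P ?a x y * V c lam y) - (min lam 0 + KK c)"
        using Pst[OF a x] by (simp add: right_diff_distrib sum_subtractf sum_distrib_right[symmetric])
      then have "\<beta> * (\<Sum>y\<in>{1..n}. P ?a x y * (V c lam y - (min lam 0 + KK c))) = \<beta> * (\<Sum>y\<in>{1..n}. P ?a x y * V c lam y) - \<beta> * (min lam 0 + KK c)"
        by (simp add: right_diff_distrib)
      moreover have "(1 - \<beta>) * (min lam 0 + KK c) = (min lam 0 + KK c) - \<beta> * (min lam 0 + KK c)"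
        by (simp add: left_diff_distrib)
      ultimately show "V c lam x - (min lam 0 + KK c) \<le> \<beta> * (\<Sum>y\<in>{1..n}. P ?a x y * (V c lam y - (min lam 0 + KK c)))"
        unfolding Hq_def by linarith
    qed
  qed
  then show ?thesis by auto
qed

lemma V_lower: "\<forall>x\<in>{1..n}. min lam 0 - KK c \<le> V c lam x"
proof -
  let ?a = "\<lambda>x. if Hq n P c \<beta> lam (V c lam) x 0 \<le> Hq n P c \<beta> lam (V c lam) x 1 then 0 else 1 :: nat"
  have "\<forall>x\<in>{1..n}. (min lam 0 - KK c) - V c lam x \<le> 0"
  proof (rule mp[where a="?a"])
    show "\<forall>x\<in>{1..n}. ?a x \<in> {0,1}" by auto
    show "\<forall>x\<in>{1..n}. (min lam 0 - KK c) - V c lam x \<le> \<beta> * (\<Sum>y\<in>{1..n}. P (?a x) x y * ((min lam 0 - KK c) - V c lam y))"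
    proof
      fix x assume x: "x \<in> {1..n}"
      have a: "?a x \<in> {0,1}" by auto
      have "V c lam x = Hq n P c \<beta> lam (V c lam) x (?a x)" using V_eq[OF x, of c lam] by auto
      moreover have "min lam 0 - KK c \<le> c x (?a x) + lam * real (?a x)" using KK[OF x a, of c] a
        by (cases "?a x = 0") auto
      then have "(1 - \<beta>) * (min lam 0 - KK c) \<le> (1 - \<beta>) * (c x (?a x) + lam * real (?a x))"
        using beta1 by (intro mult_left_mono) auto
      moreover have "(\<Sum>y\<in>{1..n}. P (?a x) x y * ((min lam 0 - KK c) - V c lam y)) = (min lam 0 - KK c) - (\<Sum>y\<in>{1..n}. P (?a x) x y * V c lam y)"
        using Pst[OF a x] by (simp add: right_diff_distrib sum_subtractf sum_distrib_right[symmetric])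
      then have "\<beta> * (\<Sum>y\<in>{1..n}. P (?a x) x y * ((min lam 0 - KK c) - V c lam y)) = \<beta> * (min lam 0 - KK c) - \<beta> * (\<Sum>y\<in>{1..n}. P (?a x) x y * V c lam y)"
        by (simp add: right_diff_distrib)
      moreover have "(1 - \<beta>) * (min lam 0 - KK c) = (min lam 0 - KK c) - \<beta> * (min lam 0 - KK c)"
        by (simp add: left_diff_distrib)
      ultimately show "(min lam 0 - KK c) - V c lam x \<le> \<beta> * (\<Sum>y\<in>{1..n}. P (?a x) x y * ((min lam 0 - KK c) - V c lam y))"
        unfolding Hq_def by linarith
    qed
  qed
  then show ?thesis by auto
qed

lemma Dq_bounds:
  assumes s: "s \<in> {1..n}"
  shows "(1 - \<beta>) * lam - 2 * KK c \<le> Dq c lam s" and "Dq c lam s \<le> (1 - \<beta>) * lam + 2 * KK c"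
proof -
  have a0: "(0::nat) \<in> {0,1}" and a1: "(1::nat) \<in> {0,1}" by auto
  have u: "\<forall>y\<in>{1..n}. V c lam y \<le> min lam 0 + KK c" and l: "\<forall>y\<in>{1..n}. min lam 0 - KK c \<le> V c lam y"
    using V_upper V_lower by auto
  have u1: "(\<Sum>y\<in>{1..n}. P 1 s y * V c lam y) \<le> min lam 0 + KK c" by (rule Pavg_le[OF a1 s u])
  have u0: "(\<Sum>y\<in>{1..n}. P 0 s y * V c lam y) \<le> min lam 0 + KK c" by (rule Pavg_le[OF a0 s u])
  have l1: "min lam 0 - KK c \<le> (\<Sum>y\<in>{1..n}. P 1 s y * V c lam y)" by (rule Pavg_ge[OF a1 s l])
  have l0: "min lam 0 - KK c \<le> (\<Sum>y\<in>{1..n}. P 0 s y * V c lam y)" by (rule Pavg_ge[OF a0 s l])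
  have c0: "\<bar>c s 0\<bar> \<le> KK c" and c1: "\<bar>c s 1\<bar> \<le> KK c" using KK[OF s a0] KK[OF s a1] by auto
  have K0: "0 \<le> KK c" using c0 by linarith
  have D: "Dq c lam s = (1 - \<beta>) * (c s 1 - c s 0) + (1 - \<beta>) * lam + \<beta> * ((\<Sum>y\<in>{1..n}. P 1 s y * V c lam y) - (\<Sum>y\<in>{1..n}. P 0 s y * V c lam y))"
    unfolding Dq_def Hq_def by (simp add: algebra_simps)
  have A0: "\<bar>c s 1 - c s 0\<bar> \<le> 2 * KK c" using c0 c1 by linarith
  have A: "\<bar>(1 - \<beta>) * (c s 1 - c s 0)\<bar> \<le> (1 - \<beta>) * (2 * KK c)"
  proof -
    have "\<bar>1 - \<beta>\<bar> = 1 - \<beta>" using beta1 by simp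
    then show ?thesis unfolding abs_mult using beta1 A0 by (simp add: mult_left_mono)
  qed
  have B0: "\<bar>(\<Sum>y\<in>{1..n}. P 1 s y * V c lam y) - (\<Sum>y\<in>{1..n}. P 0 s y * V c lam y)\<bar> \<le> 2 * KK c"
    using u1 u0 l1 l0 by linarith
  have B: "\<bar>\<beta> * ((\<Sum>y\<in>{1..n}. P 1 s y * V c lam y) - (\<Sum>y\<in>{1..n}. P 0 s y * V c lam y))\<bar> \<le> \<beta> * (2 * KK c)"
  proof -
    have "\<bar>\<beta>\<bar> = \<beta>" using beta0 by simp
    then show ?thesis unfolding abs_mult using beta0 B0 by (simp add: mult_left_mono)
  qed
  have C: "(1 - \<beta>) * (2 * KK c) + \<beta> * (2 * KK c) = 2 * KK c" by (simp add: algebra_simps)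
  show "(1 - \<beta>) * lam - 2 * KK c \<le> Dq c lam s" using A B C unfolding D by linarith
  show "Dq c lam s \<le> (1 - \<beta>) * lam + 2 * KK c" using A B C unfolding D by linarith
qed

lemma V_lip: "\<forall>x\<in>{1..n}. \<bar>V c lam x - V c mu x\<bar> \<le> \<bar>lam - mu\<bar>"
proof -
  let ?h = "\<lambda>x a. \<bar>Hq n P c \<beta> lam (V c lam) x a - Hq n P c \<beta> mu (V c mu) x a\<bar>"
  let ?a = "\<lambda>x. if ?h x 0 \<le> ?h x 1 then 1 else 0 :: nat"
  have "\<forall>x\<in>{1..n}. \<bar>V c lam x - V c mu x\<bar> - \<bar>lam - mu\<bar> \<le> 0"
  proof (rule mp[where a="?a"])
    show "\<forall>x\<in>{1..n}. ?a x \<in> {0,1}" by auto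
    show "\<forall>x\<in>{1..n}. \<bar>V c lam x - V c mu x\<bar> - \<bar>lam - mu\<bar> \<le> \<beta> * (\<Sum>y\<in>{1..n}. P (?a x) x y * (\<bar>V c lam y - V c mu y\<bar> - \<bar>lam - mu\<bar>))"
    proof
      fix x assume x: "x \<in> {1..n}"
      have a: "?a x \<in> {0,1}" by auto
      have "\<bar>V c lam x - V c mu x\<bar> \<le> max (?h x 0) (?h x 1)"
        unfolding V_eq[OF x, of c lam] V_eq[OF x, of c mu] by (rule min_diff)
      then have h: "\<bar>V c lam x - V c mu x\<bar> \<le> ?h x (?a x)" by (auto simp: max_def)
      have e: "Hq n P c \<beta> lam (V c lam) x (?a x) - Hq n P c \<beta> mu (V c mu) x (?a x)
          = (1 - \<beta>) * ((lam - mu) * real (?a x)) + \<beta> * (\<Sum>y\<in>{1..n}. P (?a x) x y * (V c lam y - V c mu y))"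
        unfolding Hq_def by (simp add: algebra_simps sum_subtractf)
      have t1: "\<bar>(1 - \<beta>) * ((lam - mu) * real (?a x))\<bar> \<le> (1 - \<beta>) * \<bar>lam - mu\<bar>"
        using beta1 a by (auto simp: abs_mult)
      have t2: "\<bar>\<Sum>y\<in>{1..n}. P (?a x) x y * (V c lam y - V c mu y)\<bar> \<le> (\<Sum>y\<in>{1..n}. P (?a x) x y * \<bar>V c lam y - V c mu y\<bar>)"
      proof -
        have "\<bar>\<Sum>y\<in>{1..n}. P (?a x) x y * (V c lam y - V c mu y)\<bar> \<le> (\<Sum>y\<in>{1..n}. \<bar>P (?a x) x y * (V c lam y - V c mu y)\<bar>)"
          by (rule sum_abs)
        also have "\<dots> = (\<Sum>y\<in>{1..n}. P (?a x) x y * \<bar>V c lam y - V c mu y\<bar>)"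
          using a x Pnn by (intro sum.cong refl) (auto simp: abs_mult)
        finally show ?thesis .
      qed
      have t3: "(\<Sum>y\<in>{1..n}. P (?a x) x y * (\<bar>V c lam y - V c mu y\<bar> - \<bar>lam - mu\<bar>)) = (\<Sum>y\<in>{1..n}. P (?a x) x y * \<bar>V c lam y - V c mu y\<bar>) - \<bar>lam - mu\<bar>"
        using Pst[OF a x] by (simp add: right_diff_distrib sum_subtractf sum_distrib_right[symmetric])
      have "?h x (?a x) \<le> \<bar>(1 - \<beta>) * ((lam - mu) * real (?a x))\<bar> + \<bar>\<beta> * (\<Sum>y\<in>{1..n}. P (?a x) x y * (V c lam y - V c mu y))\<bar>"
        unfolding e by (rule abs_triangle_ineq)
      moreover have "\<bar>\<beta> * (\<Sum>y\<in>{1..n}. P (?a x) x y * (V c lam y - V c mu y))\<bar> \<le> \<beta> * (\<Sum>y\<in>{1..n}. P (?a x) x y * \<bar>V c lam y - V c mu y\<bar>)"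
      proof -
        have "\<bar>\<beta>\<bar> = \<beta>" using beta0 by simp
        then show ?thesis unfolding abs_mult using t2 beta0 by (simp add: mult_left_mono)
      qed
      ultimately have "?h x (?a x) \<le> (1 - \<beta>) * \<bar>lam - mu\<bar> + \<beta> * (\<Sum>y\<in>{1..n}. P (?a x) x y * \<bar>V c lam y - V c mu y\<bar>)"
        using t1 by linarith
      then show "\<bar>V c lam x - V c mu x\<bar> - \<bar>lam - mu\<bar> \<le> \<beta> * (\<Sum>y\<in>{1..n}. P (?a x) x y * (\<bar>V c lam y - V c mu y\<bar> - \<bar>lam - mu\<bar>))"
        using h unfolding t3 by (simp add: algebra_simps)
    qed
  qed
  then show ?thesis by auto
qed

lemma lin3: "(a1::real) - b1 \<le> d \<Longrightarrow> -(a0 - b0) \<le> d \<Longrightarrow> 0 \<le> d \<Longrightarrow> a1 - b1 - (a0 - b0) \<le> 3 * d"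
  by linarith

lemma Dq_lip:
  assumes s: "s \<in> {1..n}"
  shows "\<bar>Dq c lam s - Dq c mu s\<bar> \<le> 3 * \<bar>lam - mu\<bar>"
proof -
  have a0: "(0::nat) \<in> {0,1}" and a1: "(1::nat) \<in> {0,1}" by auto
  have L: "\<forall>y\<in>{1..n}. \<bar>V c lam y - V c mu y\<bar> \<le> \<bar>lam - mu\<bar>" by (rule V_lip)
  have "\<bar>Hq n P c \<beta> lam (V c lam) s a - Hq n P c \<beta> mu (V c mu) s a\<bar> \<le> \<bar>lam - mu\<bar>" if a: "a \<in> {0,1}" for a
  proof -
    have e: "Hq n P c \<beta> lam (V c lam) s a - Hq n P c \<beta> mu (V c mu) s a
          = (1 - \<beta>) * ((lam - mu) * real a) + \<beta> * (\<Sum>y\<in>{1..n}. P a s y * (V c lam y - V c mu y))"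
      unfolding Hq_def by (simp add: algebra_simps sum_subtractf)
    have t1: "\<bar>(1 - \<beta>) * ((lam - mu) * real a)\<bar> \<le> (1 - \<beta>) * \<bar>lam - mu\<bar>"
      using beta1 a by (auto simp: abs_mult)
    have "\<bar>\<Sum>y\<in>{1..n}. P a s y * (V c lam y - V c mu y)\<bar> \<le> (\<Sum>y\<in>{1..n}. \<bar>P a s y * (V c lam y - V c mu y)\<bar>)"
      by (rule sum_abs)
    also have "\<dots> = (\<Sum>y\<in>{1..n}. P a s y * \<bar>V c lam y - V c mu y\<bar>)"
      using a s Pnn by (intro sum.cong refl) (auto simp: abs_mult)
    also have "\<dots> \<le> \<bar>lam - mu\<bar>" by (rule Pavg_le[OF a s L])
    finally have t2: "\<bar>\<Sum>y\<in>{1..n}. P a s y * (V c lam y - V c mu y)\<bar> \<le> \<bar>lam - mu\<bar>" .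
    have "\<bar>\<beta> * (\<Sum>y\<in>{1..n}. P a s y * (V c lam y - V c mu y))\<bar> \<le> \<beta> * \<bar>lam - mu\<bar>"
      using t2 beta0 by (simp add: abs_mult mult_left_mono)
    moreover have "\<bar>(1 - \<beta>) * ((lam - mu) * real a) + \<beta> * (\<Sum>y\<in>{1..n}. P a s y * (V c lam y - V c mu y))\<bar>
       \<le> \<bar>(1 - \<beta>) * ((lam - mu) * real a)\<bar> + \<bar>\<beta> * (\<Sum>y\<in>{1..n}. P a s y * (V c lam y - V c mu y))\<bar>"
      by (rule abs_triangle_ineq)
    ultimately have "\<bar>Hq n P c \<beta> lam (V c lam) s a - Hq n P c \<beta> mu (V c mu) s a\<bar> \<le> (1 - \<beta>) * \<bar>lam - mu\<bar> + \<beta> * \<bar>lam - mu\<bar>"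
      unfolding e using t1 by linarith
    then show ?thesis by (simp add: algebra_simps)
  qed
  from this[OF a0] this[OF a1] have h0: "\<bar>Hq n P c \<beta> lam (V c lam) s 0 - Hq n P c \<beta> mu (V c mu) s 0\<bar> \<le> \<bar>lam - mu\<bar>"
    and h1: "\<bar>Hq n P c \<beta> lam (V c lam) s 1 - Hq n P c \<beta> mu (V c mu) s 1\<bar> \<le> \<bar>lam - mu\<bar>" by auto
  have z: "0 \<le> \<bar>lam - mu\<bar>" by simp
  have e: "Dq c lam s - Dq c mu s = (Hq n P c \<beta> lam (V c lam) s 1 - Hq n P c \<beta> mu (V c mu) s 1) - (Hq n P c \<beta> lam (V c lam) s 0 - Hq n P c \<beta> mu (V c mu) s 0)"
    unfolding Dq_def by simp
  have "Dq c lam s - Dq c mu s \<le> 3 * \<bar>lam - mu\<bar>" unfolding e by (rule lin3[OF abs_le_D1[OF h1] abs_le_D2[OF h0] z])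
  moreover have "-(Dq c lam s - Dq c mu s) \<le> 3 * \<bar>lam - mu\<bar>" unfolding e
    using lin3[OF abs_le_D1[OF h0] abs_le_D2[OF h1] z] by simp
  ultimately show ?thesis by (simp add: abs_le_iff)
qed

definition Aset where "Aset c s = {lam. 0 < Dq c lam s}"

lemma whittle_Aset: "s \<in> {1..n} \<Longrightarrow> whittle n P c \<beta> s = Inf (Aset c s)"
  unfolding whittle_def Aset_def passive_set_def Dq_def by simp

lemma Aset_ne: assumes s: "s \<in> {1..n}" shows "2 * KK c / (1 - \<beta>) + 1 \<in> Aset c s"
proof -
  let ?l = "2 * KK c / (1 - \<beta>) + 1"
  have nz: "1 - \<beta> \<noteq> 0" using beta1 by simp
  have "(1 - \<beta>) * ?l = 2 * KK c + (1 - \<beta>)" using nz by (simp add: distrib_left)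
  then show ?thesis using Dq_bounds(1)[OF s, of ?l c] beta1 unfolding Aset_def by auto
qed

lemma Aset_lb: assumes s: "s \<in> {1..n}" and l: "lam \<in> Aset c s" shows "- (2 * KK c / (1 - \<beta>)) \<le> lam"
proof (rule ccontr)
  assume "\<not> - (2 * KK c / (1 - \<beta>)) \<le> lam"
  then have "lam * (1 - \<beta>) < - (2 * KK c)" using beta1 by (simp add: field_simps)
  then show False using Dq_bounds(2)[OF s, of c lam] l unfolding Aset_def by (simp add: algebra_simps)
qed

lemma Aset_bdd: "s \<in> {1..n} \<Longrightarrow> bdd_below (Aset c s)"
  using Aset_lb unfolding bdd_below_def by blast

lemma whittle_zero:
  assumes s: "s \<in> {1..n}"
  shows "Dq c (whittle n P c \<beta> s) s = 0"
proof -
  let ?w = "whittle n P c \<beta> s"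
  have w: "?w = Inf (Aset c s)" by (rule whittle_Aset[OF s])
  have ne: "Aset c s \<noteq> {}" using Aset_ne[OF s] by blast
  have bdd: "bdd_below (Aset c s)" by (rule Aset_bdd[OF s])
  have low: "?w \<le> mu" if "mu \<in> Aset c s" for mu using cInf_lower[OF that bdd] w by simp
  show ?thesis
  proof (rule ccontr)
    assume ne0: "Dq c ?w s \<noteq> 0"
    show False
    proof (cases "0 < Dq c ?w s")
      case True
      let ?mu = "?w - Dq c ?w s / 6"
      have "\<bar>Dq c ?mu s - Dq c ?w s\<bar> \<le> 3 * \<bar>?mu - ?w\<bar>" by (rule Dq_lip[OF s])
      then have "0 < Dq c ?mu s" using True by (simp add: abs_if split: if_splits)
      then have "?w \<le> ?mu" using low unfolding Aset_def by blast
      then show False using True by simp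
    next
      case False
      then have neg: "Dq c ?w s < 0" using ne0 by simp
      let ?d = "- Dq c ?w s / 6"
      have "?w + ?d \<le> mu" if mu: "mu \<in> Aset c s" for mu
      proof (rule ccontr)
        assume "\<not> ?w + ?d \<le> mu"
        moreover have "?w \<le> mu" using low mu .
        moreover have "\<bar>Dq c mu s - Dq c ?w s\<bar> \<le> 3 * \<bar>mu - ?w\<bar>" by (rule Dq_lip[OF s])
        ultimately have "Dq c mu s < 0" using neg by (simp add: abs_if split: if_splits)
        then show False using mu unfolding Aset_def by simp
      qed
      then have "?w + ?d \<le> Inf (Aset c s)" using ne by (intro cInf_greatest) auto
      then show False using neg w by simp
    qed
  qed
qed

end



context rb begin

lemma J_lin:
  assumes g: "markov_policy n g"
  shows "Jlam n P c \<beta> lam g x = Dcost n P c \<beta> g x + lam * Nact n P \<beta> g x"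
  unfolding Jlam_def Dcost_def Nact_def by (rule dv_lin[OF g])

lemma opt_transfer:
  assumes opt: "optimal n P c \<beta> lam g" and g': "markov_policy n g'"
    and eq: "\<forall>x\<in>{1..n}. Jlam n P c \<beta> lam g' x = Jlam n P c \<beta> lam g x"
  shows "optimal n P c \<beta> lam g'"
  using opt g' eq unfolding optimal_def by auto

definition hypN where
  "hypN \<longleftrightarrow> (\<forall>x\<in>{1..n}. \<forall>l1\<in>{0..n}. \<forall>l2\<in>{0..n}. l1 \<le> l2 \<longrightarrow>
              Nact n P \<beta> (thr l2) x \<le> Nact n P \<beta> (thr l1) x)"

lemma exch:
  assumes H: hypN and l12: "lam1 < lam2" and ba: "b \<le> a" and a: "a \<in> {0..n}" and b: "b \<in> {0..n}"
    and o1: "optimal n P c \<beta> lam1 (thr a)" and o2: "optimal n P c \<beta> lam2 (thr b)"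
  shows "optimal n P c \<beta> lam1 (thr b) \<and> optimal n P c \<beta> lam2 (thr a)"
proof -
  have eqs: "Nact n P \<beta> (thr a) x = Nact n P \<beta> (thr b) x \<and> Dcost n P c \<beta> (thr a) x = Dcost n P c \<beta> (thr b) x"
    if x: "x \<in> {1..n}" for x
  proof -
    have h1: "Jlam n P c \<beta> lam1 (thr a) x \<le> Jlam n P c \<beta> lam1 (thr b) x"
      using o1 thr_markov x unfolding optimal_def by blast
    have h2: "Jlam n P c \<beta> lam2 (thr b) x \<le> Jlam n P c \<beta> lam2 (thr a) x"
      using o2 thr_markov x unfolding optimal_def by blast
    have hN: "Nact n P \<beta> (thr a) x \<le> Nact n P \<beta> (thr b) x"
      using H x a b ba unfolding hypN_def by blast
    let ?Na = "Nact n P \<beta> (thr a) x" and ?Nb = "Nact n P \<beta> (thr b) x"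
    let ?Da = "Dcost n P c \<beta> (thr a) x" and ?Db = "Dcost n P c \<beta> (thr b) x"
    have i1: "?Da + lam1 * ?Na \<le> ?Db + lam1 * ?Nb" using h1 unfolding J_lin[OF thr_markov] .
    have i2: "?Db + lam2 * ?Nb \<le> ?Da + lam2 * ?Na" using h2 unfolding J_lin[OF thr_markov] .
    have "(lam2 - lam1) * (?Nb - ?Na) \<le> 0" using i1 i2 by (simp add: algebra_simps)
    then have "?Nb - ?Na \<le> 0" using l12 by (simp add: mult_le_0_iff)
    then have NN: "?Na = ?Nb" using hN by simp
    then show ?thesis using i1 i2 by simp
  qed
  have "optimal n P c \<beta> lam1 (thr b)"
    by (rule opt_transfer[OF o1 thr_markov]) (use eqs J_lin[OF thr_markov] in simp)
  moreover have "optimal n P c \<beta> lam2 (thr a)"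
    by (rule opt_transfer[OF o2 thr_markov]) (use eqs J_lin[OF thr_markov] in simp)
  ultimately show ?thesis ..
qed

lemma both_greedy:
  assumes d1: "dd1 n P" and d2: "dd2 n P" and d3: "dd3 n c" and d4: "dd4 n c" and l: "l < n"
  shows "greedy c (whittle n P c \<beta> (l+1)) (thr l) \<and> greedy c (whittle n P c \<beta> (l+1)) (thr (l+1))"
proof -
  let ?w = "whittle n P c \<beta> (l+1)"
  have s: "l + 1 \<in> {1..n}" using l by auto
  have z: "Dq c ?w (l+1) = 0" by (rule whittle_zero[OF s])
  have ge: "0 \<le> Dq c ?w x" if "x \<in> {1..n}" "x \<le> l + 1" for x
    using Dq_antimono[OF d1 d2 d3 d4 that(1) s that(2), of ?w] z by simp
  have le: "Dq c ?w x \<le> 0" if "x \<in> {1..n}" "l + 1 \<le> x" for x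
    using Dq_antimono[OF d1 d2 d3 d4 s that(1) that(2), of ?w] z by simp
  show ?thesis unfolding greedy_thr_iff using ge le by auto
qed

lemma whittle_J:
  assumes d1: "dd1 n P" and d2: "dd2 n P" and d3: "dd3 n c" and d4: "dd4 n c" and l: "l < n" and x: "x \<in> {1..n}"
  shows "Dcost n P c \<beta> (thr l) x + whittle n P c \<beta> (l+1) * Nact n P \<beta> (thr l) x
       = Dcost n P c \<beta> (thr (l+1)) x + whittle n P c \<beta> (l+1) * Nact n P \<beta> (thr (l+1)) x"
  using both_greedy[OF d1 d2 d3 d4 l] greedy_J x J_lin[OF thr_markov] by metis

lemma dv_zero:
  assumes "\<forall>y\<in>{1..n}. r y (g y) = 0"
  shows "disc_val n P \<beta> g r x = 0"
  unfolding disc_val_def using assms by simp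

lemma dv_pos:
  assumes g: "markov_policy n g" and x: "x \<in> {1..n}" and rnn: "\<forall>y\<in>{1..n}. \<forall>a. 0 \<le> r y a"
    and rx: "0 < r x (g x)"
  shows "0 < disc_val n P \<beta> g r x"
proof -
  have nn: "0 \<le> \<beta> ^ t * R g r t x" for t
    unfolding R_def using beta0 rnn Pt_nonneg[OF g]
    by (intro mult_nonneg_nonneg sum_nonneg) auto
  have "sum (\<lambda>t. \<beta> ^ t * R g r t x) {0} \<le> (\<Sum>t. \<beta> ^ t * R g r t x)"
    by (rule sum_le_suminf[OF R_summable[OF g]]) (use nn in auto)
  then have "r x (g x) \<le> (\<Sum>t. \<beta> ^ t * R g r t x)" using R_0[OF x] by simp
  then have "0 < (\<Sum>t. \<beta> ^ t * R g r t x)" using rx by linarith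
  then show ?thesis unfolding dv_R using beta1 by simp
qed

lemma N_nonempty:
  assumes d1: "dd1 n P" and d2: "dd2 n P" and l: "l < n"
  shows "{x\<in>{1..n}. Nact n P \<beta> (thr l) x \<noteq> Nact n P \<beta> (thr (l+1)) x} \<noteq> {}"
proof
  assume E: "{x\<in>{1..n}. Nact n P \<beta> (thr l) x \<noteq> Nact n P \<beta> (thr (l+1)) x} = {}"
  then have NE: "\<forall>x\<in>{1..n}. Nact n P \<beta> (thr l) x = Nact n P \<beta> (thr (l+1)) x" by auto
  have Deq: "Dcost n P c \<beta> (thr l) x = Dcost n P c \<beta> (thr (l+1)) x"
    if c: "dd3 n c" "dd4 n c" and x: "x \<in> {1..n}" for c x
    using whittle_J[OF d1 d2 c l x] NE x by simp
  let ?s = "l + 1"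
  have s: "?s \<in> {1..n}" using l by auto
  define c0 :: "nat \<Rightarrow> nat \<Rightarrow> real" where "c0 = (\<lambda>x a. real x * (4 - real a))"
  define e :: "nat \<Rightarrow> nat \<Rightarrow> real" where "e = (\<lambda>y a. if y = ?s \<and> a = 1 then 1 else 0)"
  define c1 :: "nat \<Rightarrow> nat \<Rightarrow> real" where "c1 = (\<lambda>y a. c0 y a + (1/2) * e y a)"
  have c03: "dd3 n c0" unfolding dd3_def c0_def
    by (auto intro!: mono_onI mult_right_mono)
  have c04: "dd4 n c0" unfolding dd4_def c0_def submodular_on_def
  proof (intro ballI impI)
    fix x1 x2 :: nat and y1 y2 :: nat
    assume "x1 \<in> {1..n}" "x2 \<in> {1..n}" "y1 \<in> {0,1}" "y2 \<in> {0,1}" and "x1 \<le> x2 \<and> y1 \<le> y2"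
    then show "real x2 * (4 - real y2) - real x2 * (4 - real y1) \<le> real x1 * (4 - real y2) - real x1 * (4 - real y1)"
      by auto
  qed
  have c13: "dd3 n c1" unfolding dd3_def c1_def c0_def e_def
  proof (intro ballI mono_onI)
    fix a r t :: nat assume "a \<in> {0,1}" "r \<in> {1..n}" "t \<in> {1..n}" "r \<le> t"
    then show "real r * (4 - real a) + 1 / 2 * (if r = ?s \<and> a = 1 then 1 else 0) \<le> real t * (4 - real a) + 1 / 2 * (if t = ?s \<and> a = 1 then 1 else 0)"
      by (cases "r = t") auto
  qed
  have c14: "dd4 n c1" unfolding dd4_def c1_def c0_def e_def submodular_on_def
  proof (intro ballI impI)
    fix x1 x2 :: nat and y1 y2 :: nat
    assume "x1 \<in> {1..n}" "x2 \<in> {1..n}" "y1 \<in> {0,1}" "y2 \<in> {0,1}" and "x1 \<le> x2 \<and> y1 \<le> y2"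
    then show "real x2 * (4 - real y2) + 1 / 2 * (if x2 = ?s \<and> y2 = 1 then 1 else 0) - (real x2 * (4 - real y1) + 1 / 2 * (if x2 = ?s \<and> y1 = 1 then 1 else 0))
       \<le> real x1 * (4 - real y2) + 1 / 2 * (if x1 = ?s \<and> y2 = 1 then 1 else 0) - (real x1 * (4 - real y1) + 1 / 2 * (if x1 = ?s \<and> y1 = 1 then 1 else 0))"
      by (cases "x1 = x2") auto
  qed
  have lin: "Dcost n P c1 \<beta> g x = Dcost n P c0 \<beta> g x + (1/2) * disc_val n P \<beta> g e x" if g: "markov_policy n g" for g x
    unfolding Dcost_def c1_def by (rule dv_lin[OF g])
  have z: "disc_val n P \<beta> (thr ?s) e ?s = 0"
    by (rule dv_zero) (auto simp: e_def thr_def)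
  have p: "0 < disc_val n P \<beta> (thr l) e ?s"
    by (rule dv_pos[OF thr_markov s]) (auto simp: e_def thr_def)
  have "Dcost n P c1 \<beta> (thr l) ?s = Dcost n P c1 \<beta> (thr ?s) ?s" by (rule Deq[OF c13 c14 s])
  moreover have "Dcost n P c0 \<beta> (thr l) ?s = Dcost n P c0 \<beta> (thr ?s) ?s" by (rule Deq[OF c03 c04 s])
  ultimately show False using lin[OF thr_markov] z p by simp
qed

lemma ell_props:
  assumes d1: "dd1 n P" and d2: "dd2 n P" and d3: "dd3 n c" and d4: "dd4 n c"
  shows "ell n P c \<beta> lam \<in> {0..n} \<and> optimal n P c \<beta> lam (thr (ell n P c \<beta> lam))"
    and "l \<in> {0..n} \<Longrightarrow> optimal n P c \<beta> lam (thr l) \<Longrightarrow> l \<le> ell n P c \<beta> lam"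
proof -
  let ?S = "{l\<in>{0..n}. optimal n P c \<beta> lam (thr l)}"
  have ne: "?S \<noteq> {}" using kk_range[of c lam] greedy_opt[OF kk_greedy[OF d1 d2 d3 d4]] by blast
  have fin: "finite ?S" by simp
  show "ell n P c \<beta> lam \<in> {0..n} \<and> optimal n P c \<beta> lam (thr (ell n P c \<beta> lam))"
    using Max_in[OF fin ne] unfolding ell_def by blast
  show "l \<in> {0..n} \<Longrightarrow> optimal n P c \<beta> lam (thr l) \<Longrightarrow> l \<le> ell n P c \<beta> lam"
    unfolding ell_def using fin by (intro Max_ge) auto
qed

lemma main:
  assumes d1: "dd1 n P" and d2: "dd2 n P" and d3: "dd3 n c" and d4: "dd4 n c"
  shows "(\<forall>lam. \<exists>l\<in>{0..n}. optimal n P c \<beta> lam (thr l)) \<and>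
         ((\<forall>x\<in>{1..n}. \<forall>l1\<in>{0..n}. \<forall>l2\<in>{0..n}. l1 \<le> l2 \<longrightarrow>
              Nact n P \<beta> (thr l2) x \<le> Nact n P \<beta> (thr l1) x) \<longrightarrow>
           (mono (ell n P c \<beta>) \<and> indexable n P c \<beta> \<and> mono_on {1..n} (whittle n P c \<beta>) \<and>
            (\<forall>l<n. {x\<in>{1..n}. Nact n P \<beta> (thr l) x \<noteq> Nact n P \<beta> (thr (l+1)) x} \<noteq> {} \<and>
               (\<forall>x\<in>{1..n}. Nact n P \<beta> (thr l) x \<noteq> Nact n P \<beta> (thr (l+1)) x \<longrightarrow>
                  whittle n P c \<beta> (l+1) =
                    (Dcost n P c \<beta> (thr (l+1)) x - Dcost n P c \<beta> (thr l) x) /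
                    (Nact n P \<beta> (thr l) x - Nact n P \<beta> (thr (l+1)) x)))))"
proof (intro conjI impI)
  show "\<forall>lam. \<exists>l\<in>{0..n}. optimal n P c \<beta> lam (thr l)"
    using kk_range greedy_opt[OF kk_greedy[OF d1 d2 d3 d4]] by blast
  assume "\<forall>x\<in>{1..n}. \<forall>l1\<in>{0..n}. \<forall>l2\<in>{0..n}. l1 \<le> l2 \<longrightarrow> Nact n P \<beta> (thr l2) x \<le> Nact n P \<beta> (thr l1) x"
  then have H: hypN unfolding hypN_def .
  show "mono (ell n P c \<beta>)"
  proof (rule monoI)
    fix l1 l2 :: real assume le: "l1 \<le> l2"
    show "ell n P c \<beta> l1 \<le> ell n P c \<beta> l2"
    proof (rule ccontr)
      assume nle: "\<not> ell n P c \<beta> l1 \<le> ell n P c \<beta> l2"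
      then have lt: "l1 < l2" using le by (cases "l1 = l2") auto
      have "optimal n P c \<beta> l2 (thr (ell n P c \<beta> l1))"
        using exch[OF H lt _ _ _ conjunct2[OF ell_props(1)[OF d1 d2 d3 d4]] conjunct2[OF ell_props(1)[OF d1 d2 d3 d4]]]
          ell_props(1)[OF d1 d2 d3 d4] nle by auto
      then have "ell n P c \<beta> l1 \<le> ell n P c \<beta> l2"
        using ell_props(2)[OF d1 d2 d3 d4] ell_props(1)[OF d1 d2 d3 d4] by blast
      then show False using nle by simp
    qed
  qed
  show "indexable n P c \<beta>"
    unfolding indexable_def
  proof (intro allI impI)
    fix l1 l2 :: real assume le: "l1 \<le> l2"
    have "kk c l1 \<le> kk c l2"
    proof (rule ccontr)
      assume nle: "\<not> kk c l1 \<le> kk c l2"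
      then have lt: "l1 < l2" using le by (cases "l1 = l2") auto
      have o1: "optimal n P c \<beta> l1 (thr (kk c l1))" by (rule greedy_opt[OF kk_greedy[OF d1 d2 d3 d4]])
      have o2: "optimal n P c \<beta> l2 (thr (kk c l2))" by (rule greedy_opt[OF kk_greedy[OF d1 d2 d3 d4]])
      have "optimal n P c \<beta> l1 (thr (kk c l2))"
        using exch[OF H lt _ kk_range kk_range o1 o2] nle by auto
      then have g: "greedy c l1 (thr (kk c l2))" by (rule opt_greedy[OF _ kk_greedy[OF d1 d2 d3 d4]])
      have x: "kk c l1 \<in> {1..n}" using kk_range[of c l1] nle by auto
      have "Dq c l1 (kk c l1) \<le> 0" using g x nle unfolding greedy_thr_iff by auto
      moreover have "0 < Dq c l1 (kk c l1)" using kk_char[OF d1 d2 d3 d4 x] by simp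
      ultimately show False by simp
    qed
    then show "passive_set n P c \<beta> l1 \<subseteq> passive_set n P c \<beta> l2"
      unfolding passive_char[OF d1 d2 d3 d4] by auto
  qed
  show "mono_on {1..n} (whittle n P c \<beta>)"
  proof (rule mono_onI)
    fix x y assume x: "x \<in> {1..n}" and y: "y \<in> {1..n}" and xy: "x \<le> y"
    have "Aset c y \<subseteq> Aset c x"
    proof
      fix lam assume "lam \<in> Aset c y"
      then have "y \<in> passive_set n P c \<beta> lam" using y unfolding Aset_def passive_set_def Dq_def by simp
      then have "x \<in> passive_set n P c \<beta> lam" using x xy unfolding passive_char[OF d1 d2 d3 d4] by auto
      then show "lam \<in> Aset c x" unfolding Aset_def passive_set_def Dq_def by simp
    qed
    then show "whittle n P c \<beta> x \<le> whittle n P c \<beta> y"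
      unfolding whittle_Aset[OF x] whittle_Aset[OF y]
      using Aset_ne[OF y] Aset_bdd[OF x] by (intro cInf_superset_mono) auto
  qed
  show "\<forall>l<n. {x\<in>{1..n}. Nact n P \<beta> (thr l) x \<noteq> Nact n P \<beta> (thr (l+1)) x} \<noteq> {} \<and>
               (\<forall>x\<in>{1..n}. Nact n P \<beta> (thr l) x \<noteq> Nact n P \<beta> (thr (l+1)) x \<longrightarrow>
                  whittle n P c \<beta> (l+1) =
                    (Dcost n P c \<beta> (thr (l+1)) x - Dcost n P c \<beta> (thr l) x) /
                    (Nact n P \<beta> (thr l) x - Nact n P \<beta> (thr (l+1)) x))"
  proof (intro allI impI conjI ballI)
    fix l assume l: "l < n"
    show "{x\<in>{1..n}. Nact n P \<beta> (thr l) x \<noteq> Nact n P \<beta> (thr (l+1)) x} \<noteq> {}"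
      by (rule N_nonempty[OF d1 d2 l])
    fix x assume x: "x \<in> {1..n}" and ne: "Nact n P \<beta> (thr l) x \<noteq> Nact n P \<beta> (thr (l+1)) x"
    have eq: "Dcost n P c \<beta> (thr l) x + whittle n P c \<beta> (l+1) * Nact n P \<beta> (thr l) x
       = Dcost n P c \<beta> (thr (l+1)) x + whittle n P c \<beta> (l+1) * Nact n P \<beta> (thr (l+1)) x"
      by (rule whittle_J[OF d1 d2 d3 d4 l x])
    have nz: "Nact n P \<beta> (thr l) x - Nact n P \<beta> (thr (l+1)) x \<noteq> 0" using ne by simp
    show "whittle n P c \<beta> (l+1) = (Dcost n P c \<beta> (thr (l+1)) x - Dcost n P c \<beta> (thr l) x) /
                    (Nact n P \<beta> (thr l) x - Nact n P \<beta> (thr (l+1)) x)"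
      using eq nz by (simp add: field_simps)
  qed
qed

end

theorem lemma5:
  fixes n :: nat and P :: "nat \<Rightarrow> nat \<Rightarrow> nat \<Rightarrow> real" and c :: "nat \<Rightarrow> nat \<Rightarrow> real" and \<beta> :: real
  assumes beta: "0 < \<beta>" "\<beta> < 1"
    and P_nonneg: "\<forall>a\<in>{0,1}. \<forall>x\<in>{1..n}. \<forall>y\<in>{1..n}. 0 \<le> P a x y"
    and P_stoch: "\<forall>a\<in>{0,1}. \<forall>x\<in>{1..n}. (\<Sum>y\<in>{1..n}. P a x y) = 1"
    and D1: "\<forall>a\<in>{0,1}. \<forall>x\<in>{1..n}. \<forall>y\<in>{1..n}. x < y \<longrightarrow>
               (\<forall>z\<in>{1..n}. (\<Sum>w\<in>{z..n}. P a x w) \<le> (\<Sum>w\<in>{z..n}. P a y w))"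
    and D2: "\<forall>z\<in>{1..n}. submodular_on {1..n} {0,1} (\<lambda>x a. \<Sum>w\<in>{z..n}. P a x w)"
    and D3: "\<forall>a\<in>{0,1}. mono_on {1..n} (\<lambda>x. c x a)"
    and D4: "submodular_on {1..n} {0,1} c"
  shows "(\<forall>lam. \<exists>l\<in>{0..n}. optimal n P c \<beta> lam (thr l)) \<and>
         ((\<forall>x\<in>{1..n}. \<forall>l1\<in>{0..n}. \<forall>l2\<in>{0..n}. l1 \<le> l2 \<longrightarrow>
              Nact n P \<beta> (thr l2) x \<le> Nact n P \<beta> (thr l1) x) \<longrightarrow>
           (mono (ell n P c \<beta>) \<and> indexable n P c \<beta> \<and> mono_on {1..n} (whittle n P c \<beta>) \<and>
            (\<forall>l<n. {x\<in>{1..n}. Nact n P \<beta> (thr l) x \<noteq> Nact n P \<beta> (thr (l+1)) x} \<noteq> {} \<and>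
               (\<forall>x\<in>{1..n}. Nact n P \<beta> (thr l) x \<noteq> Nact n P \<beta> (thr (l+1)) x \<longrightarrow>
                  whittle n P c \<beta> (l+1) =
                    (Dcost n P c \<beta> (thr (l+1)) x - Dcost n P c \<beta> (thr l) x) /
                    (Nact n P \<beta> (thr l) x - Nact n P \<beta> (thr (l+1)) x)))))"
proof -
  interpret R: rb n P \<beta> using beta P_nonneg P_stoch by unfold_locales auto
  have d1: "dd1 n P" using D1 unfolding dd1_def .
  have d2: "dd2 n P" using D2 unfolding dd2_def .
  have d3: "dd3 n c" using D3 unfolding dd3_def .
  have d4: "dd4 n c" using D4 unfolding dd4_def .
  show ?thesis by (rule R.main[OF d1 d2 d3 d4])
qed

end
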